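(* Let $\alpha\ge2$ and $k\ge1$ be integers. Let $x$ be a word of length $n$ chosen uniformly at random from $\{1,\dots,\alpha\}^n$. The expected number of pairs $(i,j)$ with $1\le i\le j\le n$ such that $x[i..j]$ is a $k$-anti-power equals $$\sum_{m=1}^{\lfloor n/k\rfloor}(n+1-km)\prod_{\ell=0}^{k-1}\left(1-\frac{\ell}{\alpha^m}\right),$$ and, for fixed $\alpha$ and $k$, this expectation is $\Theta(n^2)$ as $n\to\infty$.
   Context: $x[i..j]$ denotes the contiguous subword of $x$ from the $i$-th to the $j$-th letter. A $k$-anti-power is a word $w=w_1\cdots w_k$ with $|w_1|=\cdots=|w_k|\ge1$ and $w_1,\dots,w_k$ pairwise distinct. *)

theory Defs
  imports Complex_Main "HOL-Library.Landau_Symbols"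
begin

text \<open>x[i..j]: contiguous subword from the i-th to the j-th letter (1-based, inclusive).\<close>
definition subword :: "'a list \<Rightarrow> nat \<Rightarrow> nat \<Rightarrow> 'a list" where
  "subword x i j = take (Suc j - i) (drop (i - 1) x)"

definition anti_power :: "nat \<Rightarrow> 'a list \<Rightarrow> bool" where
  "anti_power k w \<longleftrightarrow>
     (\<exists>m\<ge>1. length w = k * m \<and> distinct (map (\<lambda>l. take m (drop (l * m) w)) [0..<k]))"

definition words :: "nat \<Rightarrow> nat \<Rightarrow> nat list set" where
  "words \<alpha> n = {x. length x = n \<and> set x \<subseteq> {1..\<alpha>}}"

definition anti_power_count :: "nat \<Rightarrow> nat list \<Rightarrow> nat" where
  "anti_power_count k x =
     card {(i, j). 1 \<le> i \<and> i \<le> j \<and> j \<le> length x \<and> anti_power k (subword x i j)}"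

definition expected_anti_powers :: "nat \<Rightarrow> nat \<Rightarrow> nat \<Rightarrow> real" where
  "expected_anti_powers \<alpha> k n =
     (\<Sum>x\<in>words \<alpha> n. real (anti_power_count k x)) / real (card (words \<alpha> n))"

end

theory Submission
  imports Defs
begin


lemma words_alt: "words a n = {xs. set xs \<subseteq> {1..a} \<and> length xs = n}"
  unfolding words_def by auto

lemma finite_words: "finite (words a n)"
  unfolding words_alt by (rule finite_lists_length_eq) simp

lemma card_words: "card (words a n) = a ^ n"
  unfolding words_alt by (subst card_lists_length_eq) auto

definition blocks :: "nat \<Rightarrow> nat \<Rightarrow> 'a list \<Rightarrow> 'a list list" where
  "blocks k m w = map (\<lambda>l. take m (drop (l * m) w)) [0..<k]"

lemma concat_blocks_take: "concat (blocks k m w) = take (k * m) w"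
proof (induction k)
  case 0 then show ?case by (simp add: blocks_def)
next
  case (Suc k)
  have "concat (blocks (Suc k) m w) = concat (blocks k m w) @ take m (drop (k*m) w)"
    by (simp add: blocks_def)
  also have "\<dots> = take (k*m) w @ take m (drop (k*m) w)" using Suc by simp
  also have "\<dots> = take (k*m + m) w" by (simp only: take_add)
  also have "\<dots> = take (Suc k * m) w" by (simp add: add.commute)
  finally show ?case .
qed

lemma concat_blocks: "length w = k * m \<Longrightarrow> concat (blocks k m w) = w"
  by (simp add: concat_blocks_take)

lemma blocks_concat: "\<forall>y\<in>set xs. length y = m \<Longrightarrow> blocks (length xs) m (concat xs) = xs"
proof (induction xs)
  case Nil then show ?case by (simp add: blocks_def)
next
  case (Cons x xs)
  have "blocks (length (x#xs)) m (concat (x#xs)) =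
     take m (x @ concat xs) # map (\<lambda>l. take m (drop (Suc l * m) (x @ concat xs))) [0..<length xs]"
    unfolding blocks_def by (simp only: length_Cons upt_conv_Cons[of 0] map_Suc_upt[symmetric]) (simp add: map_map o_def)
  also have "\<dots> = x # blocks (length xs) m (concat xs)"
    using Cons.prems by (simp add: blocks_def add.commute)
  finally show ?case using Cons by simp
qed

lemma length_concat_const: "\<forall>y\<in>set xs. length y = m \<Longrightarrow> length (concat xs) = length xs * m"
  by (induction xs) auto

lemma anti_power_blocks:
  assumes "k \<ge> 1" "length w = k * m"
  shows "anti_power k w \<longleftrightarrow> m \<ge> 1 \<and> distinct (blocks k m w)"
proof -
  have "length w = k * m' \<longleftrightarrow> m' = m" for m' using assms by auto
  then show ?thesis unfolding anti_power_def blocks_def by auto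
qed


lemma card_anti_words:
  assumes "k \<ge> 1" "m \<ge> 1"
  shows "card {w \<in> words a (k*m). anti_power k w} =
         card {xs. length xs = k \<and> distinct xs \<and> set xs \<subseteq> words a m}"
proof (rule bij_betw_same_card)
  show "bij_betw (blocks k m) {w \<in> words a (k*m). anti_power k w}
         {xs. length xs = k \<and> distinct xs \<and> set xs \<subseteq> words a m}"
  proof (rule bij_betw_byWitness[where f' = concat])
    show "\<forall>w\<in>{w \<in> words a (k*m). anti_power k w}. concat (blocks k m w) = w"
      by (auto simp: words_def concat_blocks)
    show "\<forall>xs\<in>{xs. length xs = k \<and> distinct xs \<and> set xs \<subseteq> words a m}. blocks k m (concat xs) = xs"
    proof
      fix xs assume xs: "xs \<in> {xs. length xs = k \<and> distinct xs \<and> set xs \<subseteq> words a m}"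
      then have "\<forall>y\<in>set xs. length y = m" by (auto simp: words_def)
      from blocks_concat[OF this] show "blocks k m (concat xs) = xs" using xs by simp
    qed
    have bl: "set (blocks k m w) \<subseteq> words a m" if "w \<in> words a (k*m)" for w
    proof
      fix y assume "y \<in> set (blocks k m w)"
      then obtain l where l: "l < k" "y = take m (drop (l*m) w)" by (auto simp: blocks_def)
      have "(l+1) * m \<le> k * m" using l by (intro mult_right_mono) auto
      then have "length y = m" using l that by (auto simp: words_def)
      moreover have "set y \<subseteq> set w" using l set_take_subset set_drop_subset by (metis subset_trans)
      ultimately show "y \<in> words a m" using that by (auto simp: words_def)
    qed
    show "blocks k m ` {w \<in> words a (k*m). anti_power k w}
         \<subseteq> {xs. length xs = k \<and> distinct xs \<and> set xs \<subseteq> words a m}"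
    proof (rule image_subsetI)
      fix w assume "w \<in> {w \<in> words a (k*m). anti_power k w}"
      then have w: "w \<in> words a (k*m)" "anti_power k w" by auto
      have "length w = k * m" using w by (simp add: words_def)
      then have "distinct (blocks k m w)" using anti_power_blocks[OF assms(1)] w by blast
      moreover have "length (blocks k m w) = k" by (simp add: blocks_def)
      ultimately show "blocks k m w \<in> {xs. length xs = k \<and> distinct xs \<and> set xs \<subseteq> words a m}"
        using bl[OF w(1)] by simp
    qed
    show "concat ` {xs. length xs = k \<and> distinct xs \<and> set xs \<subseteq> words a m}
         \<subseteq> {w \<in> words a (k*m). anti_power k w}"
    proof (rule image_subsetI)
      fix xs :: "nat list list" assume "xs \<in> {xs. length xs = k \<and> distinct xs \<and> set xs \<subseteq> words a m}"
      then have xs: "length xs = k" "distinct xs" "set xs \<subseteq> words a m" by auto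
      then have len: "\<forall>y\<in>set xs. length y = m" by (auto simp: words_def)
      have L: "length (concat xs) = k * m" using length_concat_const[OF len] xs by simp
      have "concat xs \<in> words a (k*m)" using L xs by (auto simp: words_def)
      moreover have "anti_power k (concat xs)"
        using anti_power_blocks[OF assms(1) L] blocks_concat[OF len] xs assms by simp
      ultimately show "concat xs \<in> {w \<in> words a (k*m). anti_power k w}" by simp
    qed
  qed
qed

lemma prod_interval_eq: "k \<le> (N::nat) \<Longrightarrow> \<Prod>{N - k + 1 .. N} = (\<Prod>l<k. (N - l))"
proof (induction k)
  case 0 then show ?case by simp
next
  case (Suc k)
  have "{N - Suc k + 1 .. N} = insert (N - k) {N - k + 1 .. N}" using Suc.prems by auto
  then have "\<Prod>{N - Suc k + 1 .. N} = (N - k) * \<Prod>{N - k + 1 .. N}" by simp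
  then show ?case using Suc by (simp add: mult.commute)
qed

lemma card_distinct_lists:
  assumes "finite A"
  shows "card {xs. length xs = k \<and> distinct xs \<and> set xs \<subseteq> A} = (\<Prod>l<k. (card A - l))"
proof (cases "k \<le> card A")
  case True then show ?thesis by (metis card_lists_distinct_length_eq[OF assms True] prod_interval_eq[OF True])
next
  case False
  have "{xs. length xs = k \<and> distinct xs \<and> set xs \<subseteq> A} = {}"
  proof -
    have "length xs \<le> card A" if "distinct xs" "set xs \<subseteq> A" for xs
      by (metis that distinct_card card_mono[OF assms])
    then show ?thesis using False by auto
  qed
  moreover have "(\<Prod>l<k. (card A - l)) = 0" using False
    by (intro prod_zero) (auto intro!: bexI[of _ "card A"])
  ultimately show ?thesis by (metis card.empty)
qed

lemma real_prod_ratio: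
  assumes "N > 0"
  shows "real (\<Prod>l<k. (N - l)) / real N ^ k = (\<Prod>l<k. (1 - real l / real N))"
proof (cases "k \<le> N")
  case True
  have "(\<Prod>l<k. (1 - real l / real N)) = (\<Prod>l<k. (real N - real l) / real N)"
    using assms by (intro prod.cong) (auto simp: field_simps)
  also have "\<dots> = (\<Prod>l<k. (real N - real l)) / real N ^ k"
    by (simp add: prod_dividef)
  also have "(\<Prod>l<k. (real N - real l)) = real (\<Prod>l<k. (N - l))"
    using True by (simp add: of_nat_diff)
  finally show ?thesis by simp
next
  case False
  then have "N \<in> {..<k}" by simp
  have "(\<Prod>l<k. (N - l)) = 0"
    by (rule prod_zero) (use \<open>N \<in> {..<k}\<close> in auto)
  moreover have "(\<Prod>l<k. (1 - real l / real N)) = 0"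
    by (rule prod_zero) (use \<open>N \<in> {..<k}\<close> assms in \<open>auto intro!: bexI[of _ N]\<close>)
  ultimately show ?thesis by (metis div_0 of_nat_0)
qed





lemma card_split:
  "card {x \<in> words a (p + L + q). P (take L (drop p x))} =
     a ^ p * a ^ q * card {w \<in> words a L. P w}"
proof -
  let ?A = "words a p \<times> ({w \<in> words a L. P w} \<times> words a q)"
  have "bij_betw (\<lambda>(u, w, v). u @ w @ v) ?A {x \<in> words a (p + L + q). P (take L (drop p x))}"
  proof (rule bij_betw_byWitness[where f' = "\<lambda>x. (take p x, take L (drop p x), drop (p + L) x)"])
    show "\<forall>t\<in>?A. (\<lambda>x. (take p x, take L (drop p x), drop (p + L) x)) ((\<lambda>(u, w, v). u @ w @ v) t) = t"
      by (auto simp: words_def)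
    show "\<forall>x\<in>{x \<in> words a (p + L + q). P (take L (drop p x))}.
       (\<lambda>(u, w, v). u @ w @ v) ((\<lambda>x. (take p x, take L (drop p x), drop (p + L) x)) x) = x"
    proof
      fix x assume "x \<in> {x \<in> words a (p + L + q). P (take L (drop p x))}"
      have "take p x @ take L (drop p x) @ drop L (drop p x) = x"
        by (metis append_take_drop_id)
      then show "(\<lambda>(u, w, v). u @ w @ v) ((\<lambda>x. (take p x, take L (drop p x), drop (p + L) x)) x) = x"
        by (simp add: add.commute[of p L])
    qed
    show "(\<lambda>(u, w, v). u @ w @ v) ` ?A \<subseteq> {x \<in> words a (p + L + q). P (take L (drop p x))}"
      by (auto simp: words_def subset_iff)
    show "(\<lambda>x. (take p x, take L (drop p x), drop (p + L) x)) ` {x \<in> words a (p + L + q). P (take L (drop p x))} \<subseteq> ?A"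
    proof (rule image_subsetI)
      fix x assume x: "x \<in> {x \<in> words a (p + L + q). P (take L (drop p x))}"
      have "set (take p x) \<subseteq> set x" "set (take L (drop p x)) \<subseteq> set x" "set (drop (p+L) x) \<subseteq> set x"
        by (auto dest: in_set_takeD in_set_dropD)
      then show "(\<lambda>x. (take p x, take L (drop p x), drop (p + L) x)) x \<in> ?A"
        using x by (auto simp: words_def)
    qed
  qed
  then have "card {x \<in> words a (p + L + q). P (take L (drop p x))} = card ?A"
    by (simp add: bij_betw_same_card)
  also have "\<dots> = a ^ p * (card {w \<in> words a L. P w} * a ^ q)"
    by (simp add: card_cartesian_product card_words)
  finally show ?thesis by simp
qed

lemma count_pair:
  assumes "1 \<le> i" "i \<le> j" "j \<le> n"
  shows "card {x \<in> words a n. anti_power k (subword x i j)} =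
           a ^ (n - (j + 1 - i)) * card {w \<in> words a (j + 1 - i). anti_power k w}"
proof -
  have n: "n = (i - 1) + (j + 1 - i) + (n - j)" using assms by simp
  have "card {x \<in> words a n. anti_power k (subword x i j)} =
        card {x \<in> words a ((i - 1) + (j + 1 - i) + (n - j)). anti_power k (take (j + 1 - i) (drop (i - 1) x))}"
    by (subst n[symmetric]) (simp add: subword_def)
  also have "\<dots> = a ^ (i - 1) * a ^ (n - j) * card {w \<in> words a (j + 1 - i). anti_power k w}"
    by (rule card_split)
  also have e: "(i - 1) + (n - j) = n - (j + 1 - i)" using assms by simp
  have "a ^ (i - 1) * a ^ (n - j) = a ^ (n - (j + 1 - i))"
    by (simp only: power_add[symmetric] e)
  finally show ?thesis .
qed

definition pairs :: "nat \<Rightarrow> (nat \<times> nat) set" where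
  "pairs n = {(i, j). 1 \<le> i \<and> i \<le> j \<and> j \<le> n}"

lemma finite_pairs: "finite (pairs n)"
  by (rule finite_subset[of _ "{1..n} \<times> {1..n}"]) (auto simp: pairs_def)

lemma sum_swap:
  "(\<Sum>x\<in>words a n. real (anti_power_count k x)) =
   (\<Sum>p\<in>pairs n. real (card {x \<in> words a n. anti_power k (subword x (fst p) (snd p))}))"
proof -
  have "real (anti_power_count k x) =
      (\<Sum>p\<in>pairs n. if anti_power k (subword x (fst p) (snd p)) then 1 else 0)"
    if "x \<in> words a n" for x
  proof -
    have "anti_power_count k x = card {p \<in> pairs n. anti_power k (subword x (fst p) (snd p))}"
      using that unfolding anti_power_count_def pairs_def words_def
      by (intro arg_cong[where f = card]) auto
    then have "real (anti_power_count k x) = real (card {p \<in> pairs n. anti_power k (subword x (fst p) (snd p))})"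
      by (simp only:)
    also have "\<dots> = (\<Sum>p\<in>{p \<in> pairs n. anti_power k (subword x (fst p) (snd p))}. 1)"
      by (rule real_of_card)
    also have "\<dots> = (\<Sum>p\<in>pairs n. if anti_power k (subword x (fst p) (snd p)) then 1 else 0)"
      by (rule sum.inter_filter[OF finite_pairs])
    finally show ?thesis .
  qed
  then have "(\<Sum>x\<in>words a n. real (anti_power_count k x)) =
     (\<Sum>x\<in>words a n. \<Sum>p\<in>pairs n. if anti_power k (subword x (fst p) (snd p)) then 1 else 0)"
    by (rule sum.cong[OF refl])
  also have "\<dots> = (\<Sum>p\<in>pairs n. \<Sum>x\<in>words a n. if anti_power k (subword x (fst p) (snd p)) then 1 else 0)"
    by (rule sum.swap)
  also have "\<dots> = (\<Sum>p\<in>pairs n. real (card {x \<in> words a n. anti_power k (subword x (fst p) (snd p))}))"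
  proof (rule sum.cong[OF refl])
    fix p :: "nat \<times> nat"
    have "(\<Sum>x\<in>words a n. if anti_power k (subword x (fst p) (snd p)) then 1 else 0) =
          (\<Sum>x\<in>{x \<in> words a n. anti_power k (subword x (fst p) (snd p))}. (1::real))"
      by (rule sum.inter_filter[OF finite_words, symmetric])
    also have "\<dots> = real (card {x \<in> words a n. anti_power k (subword x (fst p) (snd p))})"
      by (rule real_of_card[symmetric])
    finally show "(\<Sum>x\<in>words a n. if anti_power k (subword x (fst p) (snd p)) then 1 else 0) = \<dots>" .
  qed
  finally show ?thesis .
qed

definition gprob :: "nat \<Rightarrow> nat \<Rightarrow> nat \<Rightarrow> real" where
  "gprob a k L = real (card {w \<in> words a L. anti_power k w}) / real a ^ L"

lemma expected_pairs:
  assumes "a > 0"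
  shows "expected_anti_powers a k n = (\<Sum>p\<in>pairs n. gprob a k (snd p + 1 - fst p))"
proof -
  have "expected_anti_powers a k n =
     (\<Sum>p\<in>pairs n. real (card {x \<in> words a n. anti_power k (subword x (fst p) (snd p))})) / real a ^ n"
    unfolding expected_anti_powers_def sum_swap card_words by simp
  also have "\<dots> = (\<Sum>p\<in>pairs n. real (card {x \<in> words a n. anti_power k (subword x (fst p) (snd p))}) / real a ^ n)"
    by (simp add: sum_divide_distrib)
  also have "\<dots> = (\<Sum>p\<in>pairs n. gprob a k (snd p + 1 - fst p))"
  proof (rule sum.cong[OF refl])
    fix p assume "p \<in> pairs n"
    then obtain i j where p: "p = (i, j)" "1 \<le> i" "i \<le> j" "j \<le> n" by (auto simp: pairs_def)
    define L where "L = j + 1 - i"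
    have Ln: "L \<le> n" using p by (simp add: L_def)
    have an: "real a ^ n = real a ^ (n - L) * real a ^ L"
      using Ln by (simp add: power_add[symmetric])
    show "real (card {x \<in> words a n. anti_power k (subword x (fst p) (snd p))}) / real a ^ n =
          gprob a k (snd p + 1 - fst p)"
      unfolding p fst_conv snd_conv count_pair[OF p(2-4)] gprob_def L_def[symmetric] an
      using assms by (simp add: field_simps)
  qed
  finally show ?thesis .
qed

lemma card_pairs_len:
  assumes "1 \<le> L" "L \<le> n"
  shows "card {p \<in> pairs n. snd p + 1 - fst p = L} = n + 1 - L"
proof -
  have "{p \<in> pairs n. snd p + 1 - fst p = L} = (\<lambda>i. (i, i + L - 1)) ` {1..n + 1 - L}"
  proof (rule set_eqI, rule iffI)
    fix p assume "p \<in> {p \<in> pairs n. snd p + 1 - fst p = L}"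
    then obtain i j where "p = (i, j)" "1 \<le> i" "i \<le> j" "j \<le> n" "j + 1 - i = L"
      by (auto simp: pairs_def)
    then show "p \<in> (\<lambda>i. (i, i + L - 1)) ` {1..n + 1 - L}"
      by (intro image_eqI[of _ _ i]) auto
  next
    fix p assume "p \<in> (\<lambda>i. (i, i + L - 1)) ` {1..n + 1 - L}"
    then show "p \<in> {p \<in> pairs n. snd p + 1 - fst p = L}"
      using assms by (auto simp: pairs_def)
  qed
  moreover have "inj_on (\<lambda>i. (i, i + L - 1)) {1..n + 1 - L}" by (auto simp: inj_on_def)
  ultimately show ?thesis by (simp add: card_image)
qed

lemma group_len:
  "(\<Sum>p\<in>pairs n. f (snd p + 1 - fst p)) = (\<Sum>L=1..n. real (n + 1 - L) * f L)"
proof -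
  have "(\<Sum>p\<in>pairs n. f (snd p + 1 - fst p)) =
      (\<Sum>L\<in>{1..n}. \<Sum>p\<in>{p \<in> pairs n. snd p + 1 - fst p = L}. f (snd p + 1 - fst p))"
    by (rule sum.group[symmetric]) (use finite_pairs in \<open>auto simp: pairs_def\<close>)
  also have "\<dots> = (\<Sum>L=1..n. real (n + 1 - L) * f L)"
  proof (rule sum.cong[OF refl])
    fix L assume "L \<in> {1..n}"
    then have "(\<Sum>p\<in>{p \<in> pairs n. snd p + 1 - fst p = L}. f (snd p + 1 - fst p)) =
        (\<Sum>p\<in>{p \<in> pairs n. snd p + 1 - fst p = L}. f L)" by simp
    also have "\<dots> = real (n + 1 - L) * f L" using card_pairs_len \<open>L \<in> {1..n}\<close> by simp
    finally show "(\<Sum>p\<in>{p \<in> pairs n. snd p + 1 - fst p = L}. f (snd p + 1 - fst p)) =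
        real (n + 1 - L) * f L" .
  qed
  finally show ?thesis .
qed




lemma gprob_nondvd:
  assumes "\<not> k dvd L"
  shows "gprob a k L = 0"
proof -
  have "{w \<in> words a L. anti_power k w} = {}"
    using assms by (auto simp: words_def anti_power_def)
  then show ?thesis unfolding gprob_def by (metis card.empty of_nat_0 div_0)
qed

lemma gprob_mult:
  assumes "k \<ge> 1" "m \<ge> 1" "a > 0"
  shows "gprob a k (k * m) = (\<Prod>l<k. (1 - real l / real a ^ m))"
proof -
  have "card {w \<in> words a (k*m). anti_power k w} = (\<Prod>l<k. (a ^ m - l))"
    using card_anti_words[OF assms(1,2)] card_distinct_lists[OF finite_words] card_words by simp
  moreover have "real a ^ (k * m) = real (a ^ m) ^ k"
    by (simp add: power_mult[symmetric] mult.commute)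
  ultimately have "gprob a k (k * m) = real (\<Prod>l<k. (a ^ m - l)) / real (a ^ m) ^ k"
    by (simp add: gprob_def)
  also have "\<dots> = (\<Prod>l<k. (1 - real l / real (a ^ m)))"
    by (rule real_prod_ratio) (use assms in simp)
  finally show ?thesis by simp
qed

lemma formula:
  assumes "a > 0" "k \<ge> 1"
  shows "expected_anti_powers a k n =
     (\<Sum>m=1..n div k. real (n + 1 - k * m) * (\<Prod>l<k. (1 - real l / real a ^ m)))"
proof -
  define h where "h L = real (n + 1 - L) * gprob a k L" for L
  have "expected_anti_powers a k n = (\<Sum>p\<in>pairs n. gprob a k (snd p + 1 - fst p))"
    by (rule expected_pairs[OF assms(1)])
  also have "\<dots> = (\<Sum>L=1..n. real (n + 1 - L) * gprob a k L)"
    by (rule group_len)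
  also have "\<dots> = (\<Sum>L=1..n. h L)" by (simp add: h_def)
  also have "\<dots> = sum h ((\<lambda>m. k * m) ` {1..n div k})"
  proof (rule sum.mono_neutral_right)
    show "finite {1..n}" by simp
    show "(\<lambda>m. k * m) ` {1..n div k} \<subseteq> {1..n}"
    proof
      fix L assume "L \<in> (\<lambda>m. k * m) ` {1..n div k}"
      then obtain m where m0: "m \<in> {1..n div k}" "L = k * m" by (rule imageE)
      then have m: "L = k * m" "1 \<le> m" "m \<le> n div k" by auto
      have "k * m \<le> k * (n div k)" using m by simp
      also have "\<dots> \<le> n" by (rule times_div_less_eq_dividend)
      finally have "L \<le> n" using m by simp
      moreover have "1 \<le> L" using m assms by (simp add: one_le_mult_iff)
      ultimately show "L \<in> {1..n}" by simp
    qed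
    show "\<forall>i\<in>{1..n} - (\<lambda>m. k * m) ` {1..n div k}. h i = 0"
    proof
      fix L assume L: "L \<in> {1..n} - (\<lambda>m. k * m) ` {1..n div k}"
      have "\<not> k dvd L"
      proof
        assume "k dvd L"
        then obtain m where m: "L = k * m" by auto
        have "m \<ge> 1" using L m by (cases m) auto
        moreover have "m \<le> n div k"
        proof -
          have "L div k = m" using m assms by simp
          moreover have "L \<le> n" using L by simp
          ultimately show ?thesis using div_le_mono by metis
        qed
        ultimately have "L \<in> (\<lambda>m. k * m) ` {1..n div k}" using m by (intro image_eqI[of _ _ m]) auto
        with L show False by blast
      qed
      then show "h L = 0" by (simp add: h_def gprob_nondvd)
    qed
  qed
  also have "\<dots> = (\<Sum>m=1..n div k. h (k * m))"
  proof -
    have inj: "inj_on (\<lambda>m. k * m) {1..n div k}" using assms by (simp add: inj_on_def)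
    show ?thesis by (simp only: sum.reindex[OF inj] o_def)
  qed
  also have "\<dots> = (\<Sum>m=1..n div k. real (n + 1 - k * m) * (\<Prod>l<k. (1 - real l / real a ^ m)))"
  proof (rule sum.cong[OF refl])
    fix m assume "m \<in> {1..n div k}"
    then have "m \<ge> 1" by simp
    then show "h (k * m) = real (n + 1 - k * m) * (\<Prod>l<k. (1 - real l / real a ^ m))"
      unfolding h_def using gprob_mult[OF assms(2) _ assms(1)] by simp
  qed
  finally show ?thesis .
qed




lemma theta_bound:
  fixes P :: "nat \<Rightarrow> real"
  assumes P01: "\<And>m. m \<ge> 1 \<Longrightarrow> 0 \<le> P m \<and> P m \<le> 1" and c: "c > 0"
    and Pc: "\<And>m. m \<ge> k \<Longrightarrow> P m \<ge> c" and k: "k \<ge> 1"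
  shows "(\<lambda>n. \<Sum>m=1..n div k. real (n + 1 - k * m) * P m) \<in> \<Theta>(\<lambda>n. real n ^ 2)"
proof (rule bigthetaI'[of "c / (8 * k)" 2])
  show "c / (8 * k) > 0" using c k by simp
  show "(2::real) > 0" by simp
  define E where "E n = (\<Sum>m=1..n div k. real (n + 1 - k * m) * P m)" for n
  have E0: "E n \<ge> 0" for n
    unfolding E_def by (intro sum_nonneg mult_nonneg_nonneg) (use P01 in auto)
  have up: "E n \<le> 2 * real n ^ 2" if "n \<ge> 1" for n
  proof -
    have "E n \<le> (\<Sum>m=1..n div k. real (n + 1))"
      unfolding E_def
    proof (rule sum_mono)
      fix m assume "m \<in> {1..n div k}"
      then have "0 \<le> P m" "P m \<le> 1" using P01 by auto
      moreover have "real (n + 1 - k * m) \<le> real (n + 1)" by simp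
      ultimately show "real (n + 1 - k * m) * P m \<le> real (n + 1)"
        by (metis mult_left_le of_nat_0_le_iff order_trans)
    qed
    also have "\<dots> = real (n div k) * real (n + 1)" by simp
    also have "\<dots> \<le> real n * real (n + 1)"
      by (intro mult_right_mono) (auto simp: div_le_dividend)
    also have "\<dots> \<le> 2 * real n ^ 2" using that by (simp add: power2_eq_square algebra_simps)
    finally show ?thesis .
  qed
  have low: "c / (8 * k) * real n ^ 2 \<le> E n" if n: "n \<ge> 4 * k ^ 2" for n
  proof -
    define M where "M = n div (2 * k)"
    have M1: "n < 2 * k * (M + 1)"
    proof -
      have "n = 2 * k * M + n mod (2 * k)" unfolding M_def by simp
      moreover have "n mod (2 * k) < 2 * k" using k by simp
      ultimately show ?thesis by (simp add: algebra_simps)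
    qed
    have M2: "2 * k * M \<le> n" unfolding M_def by (rule times_div_less_eq_dividend)
    have "k * k * 4 \<le> n" using n by (simp add: power2_eq_square)
    then have "k * k * 4 < 2 * k * (M + 1)" using M1 by linarith
    then have "(2 * k) * (2 * k) < (2 * k) * (M + 1)" by (simp add: algebra_simps)
    then have "2 * k < M + 1" using mult_less_cancel1 by blast
    then have kM: "k \<le> M" by simp
    have sub: "{k..M} \<subseteq> {1..n div k}"
    proof
      fix m assume "m \<in> {k..M}"
      then have "k \<le> m" "m \<le> M" by auto
      moreover have "M \<le> n div k"
      proof -
        have "k * M \<le> n" using M2 by (simp add: algebra_simps)
        then show ?thesis using k by (metis div_le_mono nonzero_mult_div_cancel_left not_one_le_zero)
      qed
      ultimately show "m \<in> {1..n div k}" using k by auto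
    qed
    have tm: "real n / 2 * c \<le> real (n + 1 - k * m) * P m" if "m \<in> {k..M}" for m
    proof -
      have m: "k \<le> m" "m \<le> M" using that by auto
      have "2 * (k * m) \<le> 2 * k * M" using m by simp
      then have "2 * (k * m) \<le> n" using M2 by linarith
      then have h1: "2 * (k * m) \<le> n" .
      have e1: "real (n + 1 - k * m) = real n + 1 - real k * real m" using h1 by (simp add: of_nat_diff)
      have e2: "2 * (real k * real m) \<le> real n"
        using of_nat_le_iff[where 'a=real, of "2 * (k * m)" n, THEN iffD2, OF h1] by simp
      have "real n / 2 \<le> real (n + 1 - k * m)" unfolding e1 using e2 by linarith
      moreover have "c \<le> P m" using Pc m by simp
      ultimately show ?thesis using c by (intro mult_mono) auto
    qed
    have cardS: "real n / (4 * k) \<le> real (card {k..M})"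
    proof -
      have "real (card {k..M}) = real M + 1 - real k" using kM by (simp add: of_nat_diff)
      moreover have r1: "real n < 2 * real k * (real M + 1)"
        using of_nat_less_iff[where 'a=real, of n "2 * k * (M + 1)", THEN iffD2, OF M1] by (simp add: algebra_simps)
      have r2: "4 * real k * real k \<le> real n"
        using of_nat_le_iff[where 'a=real, of "k * k * 4" n, THEN iffD2, OF \<open>k * k * 4 \<le> n\<close>] by simp
      have K: "real k > 0" using k by simp
      have a: "real n / (2 * real k) < real M + 1" using r1 K by (simp add: divide_less_eq mult.commute)
      have b: "real k \<le> real n / (4 * real k)" using r2 K by (simp add: le_divide_eq mult.commute)
      have cc: "real n / (2 * real k) = real n / (4 * real k) + real n / (4 * real k)" using K by (simp add: field_simps)
      ultimately show ?thesis using a b cc by linarith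
    qed
    have "E n \<ge> (\<Sum>m\<in>{k..M}. real (n + 1 - k * m) * P m)"
      unfolding E_def
      by (rule sum_mono2[OF _ sub]) (use P01 in \<open>auto intro!: mult_nonneg_nonneg\<close>)
    moreover have "(\<Sum>m\<in>{k..M}. real (n + 1 - k * m) * P m) \<ge> real (card {k..M}) * (real n / 2 * c)"
      using sum_mono[of "{k..M}" "\<lambda>_. real n / 2 * c", OF tm] by simp
    moreover have "real (card {k..M}) * (real n / 2 * c) \<ge> real n / (4 * k) * (real n / 2 * c)"
      using cardS c by (intro mult_right_mono) auto
    moreover have "real n / (4 * k) * (real n / 2 * c) = c / (8 * k) * real n ^ 2"
      by (simp add: power2_eq_square field_simps)
    ultimately show ?thesis by linarith
  qed
  show "\<forall>\<^sub>F n in at_top. c / (8 * k) * norm (real n ^ 2) \<le> norm (\<Sum>m=1..n div k. real (n + 1 - k * m) * P m)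
      \<and> norm (\<Sum>m=1..n div k. real (n + 1 - k * m) * P m) \<le> 2 * norm (real n ^ 2)"
  proof (rule eventually_mono[OF eventually_ge_at_top[of "4 * k ^ 2 + 1"]])
    fix n assume n: "4 * k ^ 2 + 1 \<le> n"
    then have "c / (8 * k) * real n ^ 2 \<le> E n" "E n \<le> 2 * real n ^ 2" using low up by auto
    then show "c / (8 * k) * norm (real n ^ 2) \<le> norm (\<Sum>m=1..n div k. real (n + 1 - k * m) * P m)
      \<and> norm (\<Sum>m=1..n div k. real (n + 1 - k * m) * P m) \<le> 2 * norm (real n ^ 2)"
      using E0[of n] unfolding E_def by simp
  qed
qed




lemma gprob_le1: "a > 0 \<Longrightarrow> gprob a k L \<le> 1"
proof -
  assume a: "a > 0"
  have "card {w \<in> words a L. anti_power k w} \<le> card (words a L)"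
    by (rule card_mono[OF finite_words]) auto
  then have "real (card {w \<in> words a L. anti_power k w}) \<le> real a ^ L"
    using card_words by (metis of_nat_le_iff of_nat_power)
  then show ?thesis unfolding gprob_def using a by (simp add: divide_le_eq_1)
qed

lemma gprob_ge0: "gprob a k L \<ge> 0"
  unfolding gprob_def by simp

theorem corollary6p3:
  fixes \<alpha> k :: nat
  assumes "\<alpha> \<ge> 2" and "k \<ge> 1"
  shows "(\<forall>n. expected_anti_powers \<alpha> k n =
            (\<Sum>m=1..n div k. real (n + 1 - k * m) *
               (\<Prod>l<k. (1 - real l / real \<alpha> ^ m))))
         \<and> (\<lambda>n. expected_anti_powers \<alpha> k n) \<in> \<Theta>(\<lambda>n. real n ^ 2)"
proof -
  have a0: "\<alpha> > 0" using assms by simp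
  define P where "P m = (\<Prod>l<k. (1 - real l / real \<alpha> ^ m))" for m
  have F: "\<forall>n. expected_anti_powers \<alpha> k n =
            (\<Sum>m=1..n div k. real (n + 1 - k * m) * P m)"
    unfolding P_def using formula[OF a0 assms(2)] by blast
  have P01: "0 \<le> P m \<and> P m \<le> 1" if "m \<ge> 1" for m
    using gprob_mult[OF assms(2) that a0] gprob_ge0 gprob_le1[OF a0] unfolding P_def by metis
  have kpow: "real k < real \<alpha> ^ k"
  proof -
    have "k < 2 ^ k" by (rule less_exp)
    also have "(2::nat) ^ k \<le> \<alpha> ^ k" using assms(1) by (rule power_mono) simp
    finally have "k < \<alpha> ^ k" .
    then show ?thesis by (metis of_nat_less_iff of_nat_power)
  qed
  have cpos: "P k > 0"
    unfolding P_def
  proof (rule prod_pos)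
    fix l assume "l \<in> {..<k}"
    then have "real l < real \<alpha> ^ k" using kpow by simp
    then show "0 < 1 - real l / real \<alpha> ^ k" using a0 by simp
  qed
  have Pc: "P m \<ge> P k" if "m \<ge> k" for m
    unfolding P_def
  proof (rule prod_mono)
    fix l assume "l \<in> {..<k}"
    then have "real l < real \<alpha> ^ k" using kpow by simp
    moreover have "real \<alpha> ^ k \<le> real \<alpha> ^ m" using that assms(1) by (intro power_increasing) auto
    moreover have "real \<alpha> ^ k > 0" using a0 by simp
    moreover have "real \<alpha> ^ m > 0" using a0 by simp
    ultimately have "real l / real \<alpha> ^ m \<le> real l / real \<alpha> ^ k"
      by (intro divide_left_mono) (auto intro: mult_pos_pos)
    moreover have "real l / real \<alpha> ^ k < 1"
      using \<open>real l < real \<alpha> ^ k\<close> \<open>real \<alpha> ^ k > 0\<close> by simp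
    ultimately show "0 \<le> 1 - real l / real \<alpha> ^ k \<and> 1 - real l / real \<alpha> ^ k \<le> 1 - real l / real \<alpha> ^ m"
      by simp
  qed
  have T: "(\<lambda>n. \<Sum>m=1..n div k. real (n + 1 - k * m) * P m) \<in> \<Theta>(\<lambda>n. real n ^ 2)"
    by (rule theta_bound[OF P01 cpos Pc assms(2)])
  have "(\<lambda>n. expected_anti_powers \<alpha> k n) = (\<lambda>n. \<Sum>m=1..n div k. real (n + 1 - k * m) * P m)"
    using F by blast
  with T F show ?thesis unfolding P_def by simp
qed


end
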